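(* Let $\mathbb{M}\subset\mathbb{T}^d$ be Lebesgue measurable and let $\mathbf{a}\in\mathbb{R}^d$ satisfy $\Lambda_{\mathbb{M}}(\mathbf{a})>0$. Then there exist $c>0$ and $\epsilon>0$ such that $\Lambda_{\mathbb{M}}(\lambda\mathbf{a})\ge c\lambda$ for all $0<\lambda<\epsilon$.
   Context: $\mathbb{T}^d=(\mathbb{R}/2\pi\mathbb{Z})^d$ with Lebesgue measure $|\cdot|$. For $\mathbf{a}\in\mathbb{R}^d$, $\mathbb{M}+\mathbf{a}$ is the translate of $\mathbb{M}$ (mod $2\pi$ in each coordinate), and $\Lambda_{\mathbb{M}}(\mathbf{a})=|\mathbb{M}\setminus(\mathbb{M}+\mathbf{a})|$. *)

theory Defs
  imports "HOL-Analysis.Analysis"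
begin

text \<open>The torus T^d = (R / 2 pi Z)^d is represented by the fundamental domain
  [0, 2 pi)^d inside real^'n (d = CARD('n)); Lebesgue measure on T^d is
  Lebesgue measure restricted to this cube.\<close>

definition torus :: "(real ^ 'n) set" where
  "torus = {x. \<forall>i. 0 \<le> x $ i \<and> x $ i < 2 * pi}"

definition wrap2pi :: "real \<Rightarrow> real" where
  "wrap2pi t = t - 2 * pi * of_int \<lfloor>t / (2 * pi)\<rfloor>"

definition torus_translate :: "(real ^ 'n) set \<Rightarrow> real ^ 'n \<Rightarrow> (real ^ 'n) set" where
  "torus_translate M a = (\<lambda>y. \<chi> i. wrap2pi (y $ i + a $ i)) ` M"

definition Lambda :: "(real ^ 'n) set \<Rightarrow> real ^ 'n \<Rightarrow> real" where
  "Lambda M a = measure lebesgue (M - torus_translate M a)"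

end

theory Submission
  imports Defs
begin

lemma wrap_bounds: "0 \<le> wrap2pi t" "wrap2pi t < 2*pi"
proof -
  have p: "2*pi > 0" by simp
  have "of_int \<lfloor>t/(2*pi)\<rfloor> \<le> t/(2*pi)" by simp
  hence "2*pi* of_int \<lfloor>t/(2*pi)\<rfloor> \<le> 2*pi*(t/(2*pi))" using p by (intro mult_left_mono) auto
  hence "2*pi* of_int \<lfloor>t/(2*pi)\<rfloor> \<le> t" by simp
  thus "0 \<le> wrap2pi t" by (simp add: wrap2pi_def)
  have "t/(2*pi) < of_int \<lfloor>t/(2*pi)\<rfloor> + 1" by linarith
  hence "2*pi*(t/(2*pi)) < 2*pi*(of_int \<lfloor>t/(2*pi)\<rfloor> + 1)" using p by (intro mult_strict_left_mono) auto
  hence "t < 2*pi*(of_int \<lfloor>t/(2*pi)\<rfloor> + 1)" by simp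
  thus "wrap2pi t < 2*pi" by (simp add: wrap2pi_def algebra_simps)
qed

lemma wrap_id: "0 \<le> t \<Longrightarrow> t < 2*pi \<Longrightarrow> wrap2pi t = t"
proof -
  assume "0 \<le> t" "t < 2*pi"
  hence "0 \<le> t/(2*pi)" "t/(2*pi) < 1" by (auto simp: field_simps)
  hence "\<lfloor>t/(2*pi)\<rfloor> = 0" by linarith
  thus ?thesis by (simp add: wrap2pi_def)
qed

lemma wrap_shift: "wrap2pi (t + 2*pi* of_int k) = wrap2pi t"
proof -
  have "(t + 2*pi* of_int k)/(2*pi) = t/(2*pi) + of_int k" by (simp add: field_simps)
  hence "\<lfloor>(t + 2*pi* of_int k)/(2*pi)\<rfloor> = \<lfloor>t/(2*pi)\<rfloor> + k" by simp
  thus ?thesis by (simp add: wrap2pi_def algebra_simps)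
qed

lemma wrap_wrap: "wrap2pi (wrap2pi u + v) = wrap2pi (u + v)"
proof -
  have "wrap2pi u + v = (u + v) + 2*pi* of_int (- \<lfloor>u/(2*pi)\<rfloor>)" by (simp add: wrap2pi_def)
  thus ?thesis by (simp only: wrap_shift)
qed

lemma wrap_inj:
  assumes "0 \<le> y" "y < 2*pi" "0 \<le> z" "z < 2*pi" "wrap2pi (y + x) = wrap2pi (z + x)"
  shows "y = z"
proof -
  define m where "m = \<lfloor>(y+x)/(2*pi)\<rfloor> - \<lfloor>(z+x)/(2*pi)\<rfloor>"
  have "y - z = 2*pi* of_int m" using assms(5) by (simp add: wrap2pi_def m_def algebra_simps)
  hence "\<bar>2*pi* of_int m\<bar> < 2*pi" using assms(1-4) by linarith
  hence "\<bar>of_int m :: real\<bar> < 1" by (simp add: abs_mult)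
  hence "m = 0" by linarith
  thus ?thesis using \<open>y - z = _\<close> by simp
qed

lemma wrap_case: "0 \<le> y \<Longrightarrow> y < 2*pi \<Longrightarrow> 0 \<le> x \<Longrightarrow> x < 2*pi \<Longrightarrow>
   wrap2pi (y + x) = (if 2*pi \<le> y + x then y + x - 2*pi else y + x)"
proof -
  assume a: "0 \<le> y" "y < 2*pi" "0 \<le> x" "x < 2*pi"
  show ?thesis
  proof (cases "2*pi \<le> y + x")
    case True
    have "wrap2pi (y + x) = wrap2pi ((y + x - 2*pi) + 2*pi* of_int (1::int))" by simp
    also have "\<dots> = y + x - 2*pi" by (subst wrap_shift, rule wrap_id) (use a True in auto)
    finally show ?thesis using True by simp
  next
    case False thus ?thesis using a by (simp add: wrap_id)
  qed
qed

lemma closed_leb: "closed S \<Longrightarrow> S \<in> sets lebesgue"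
  by (metis borel_closed sets_completionI_sets sets_lborel)
lemma open_leb: "open S \<Longrightarrow> S \<in> sets lebesgue"
  by (metis borel_open sets_completionI_sets sets_lborel)

lemma torus_lmeas: "(torus :: (real^'n) set) \<in> lmeasurable"
proof -
  have eq: "(torus :: (real^'n) set) = (\<Inter>i. {x. 0 \<le> x$i}) \<inter> (\<Inter>i. {x. x$i < 2*pi})"
    by (auto simp: torus_def)
  have "closed (\<Inter>i. {x::real^'n. 0 \<le> x$i})"
    by (intro closed_INT) (auto simp: closed_halfspace_component_ge_cart)
  moreover have "open (\<Inter>i. {x::real^'n. x$i < 2*pi})"
    by (intro open_INT) (auto simp: open_halfspace_component_lt_cart)
  ultimately have "(torus :: (real^'n) set) \<in> sets lebesgue"
    unfolding eq by (intro sets.Int closed_leb open_leb)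
  moreover have "torus \<subseteq> cbox (0::real^'n) (\<chi> i. 2*pi)"
    using less_imp_le by (fastforce simp: torus_def mem_box_cart)
  ultimately show ?thesis by (meson fmeasurableI2 lmeasurable_cbox)
qed

lemma TT_torus: "torus_translate A x \<subseteq> torus"
  by (auto simp: torus_translate_def torus_def wrap_bounds)

lemma TT_comp: "torus_translate (torus_translate A y) x = torus_translate A (x + y)"
  unfolding torus_translate_def image_image
  by (rule image_cong[OF refl]) (simp add: vec_eq_iff wrap_wrap add.assoc add.commute[of "y $ _"])

lemma TT_inj: "inj_on (\<lambda>y::real^'n. \<chi> i. wrap2pi (y$i + x$i)) torus"
  unfolding inj_on_def
proof (intro ballI impI)
  fix y z :: "real^'n" assume y: "y \<in> torus" and z: "z \<in> torus"
    and e: "(\<chi> i. wrap2pi (y$i + x$i)) = (\<chi> i. wrap2pi (z$i + x$i))"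
  show "y = z"
  proof (subst vec_eq_iff, intro allI)
    fix i
    have "wrap2pi (y$i + x$i) = wrap2pi (z$i + x$i)" using e by (simp add: vec_eq_iff)
    thus "y$i = z$i" using y z wrap_inj[of "y$i" "z$i" "x$i"] by (auto simp: torus_def)
  qed
qed

lemma TT_diff: "A \<subseteq> torus \<Longrightarrow> B \<subseteq> torus \<Longrightarrow>
   torus_translate (A - B) x = torus_translate A x - torus_translate B x"
  unfolding torus_translate_def
  by (rule inj_on_image_set_diff[OF TT_inj]) auto

lemma TT_mono: "A \<subseteq> B \<Longrightarrow> torus_translate A x \<subseteq> torus_translate B x"
  unfolding torus_translate_def by auto

lemma TT_meas:
  fixes A :: "(real^'n) set"
  assumes A: "A \<subseteq> torus" "A \<in> sets lebesgue"
  shows "torus_translate A x \<in> lmeasurable"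
    "measure lebesgue (torus_translate A x) \<le> measure lebesgue A"
proof -
  define x' :: "real^'n" where "x' = (\<chi> i. wrap2pi (x$i))"
  define P where "P S = {y::real^'n. \<forall>i. (i\<in>S) = (2*pi \<le> y$i + x'$i)}" for S
  define v where "v S = x' - (2*pi) *\<^sub>R (\<chi> i. if i\<in>S then (1::real) else 0)" for S :: "'n set"
  have x'b: "0 \<le> x'$i" "x'$i < 2*pi" for i by (simp_all add: x'_def wrap_bounds)
  have phi: "(\<chi> i. wrap2pi (y$i + x$i)) = v S + y" if "y \<in> torus" "y \<in> P S" for y S
  proof -
    have "wrap2pi (y$i + x$i) = (v S + y)$i" for i
    proof -
      have "wrap2pi (wrap2pi (x$i) + y$i) = wrap2pi (x$i + y$i)" by (rule wrap_wrap)
      hence "wrap2pi (y$i + x$i) = wrap2pi (y$i + x'$i)" by (simp add: x'_def algebra_simps)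
      also have "\<dots> = (if 2*pi \<le> y$i + x'$i then y$i + x'$i - 2*pi else y$i + x'$i)"
        using wrap_case[of "y$i" "x'$i"] that(1) x'b[of i] by (auto simp: torus_def)
      also have "\<dots> = (v S + y)$i" using that(2) by (auto simp: P_def v_def)
      finally show ?thesis .
    qed
    thus ?thesis by (simp add: vec_eq_iff)
  qed
  have Pall: "y \<in> P {i. 2*pi \<le> y$i + x'$i}" for y by (simp add: P_def)
  have Puniq: "y \<in> P S \<Longrightarrow> S = {i. 2*pi \<le> y$i + x'$i}" for y S by (auto simp: P_def)
  have key: "torus_translate A x = (\<Union>S. (\<lambda>y. v S + y) ` (A \<inter> P S))"
  proof
    show "torus_translate A x \<subseteq> (\<Union>S. (\<lambda>y. v S + y) ` (A \<inter> P S))"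
      unfolding torus_translate_def
    proof
      fix z assume "z \<in> (\<lambda>y. \<chi> i. wrap2pi (y$i + x$i)) ` A"
      then obtain y where y: "y \<in> A" "z = (\<chi> i. wrap2pi (y$i + x$i))" by blast
      let ?S = "{i. 2*pi \<le> y$i + x'$i}"
      have "z = v ?S + y" using y phi[of y ?S] Pall[of y] A(1) by auto
      thus "z \<in> (\<Union>S. (\<lambda>y. v S + y) ` (A \<inter> P S))" using y(1) Pall[of y] by blast
    qed
    show "(\<Union>S. (\<lambda>y. v S + y) ` (A \<inter> P S)) \<subseteq> torus_translate A x"
      unfolding torus_translate_def
    proof
      fix z assume "z \<in> (\<Union>S. (\<lambda>y. v S + y) ` (A \<inter> P S))"
      then obtain S y where y: "y \<in> A" "y \<in> P S" "z = v S + y" by blast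
      hence "z = (\<chi> i. wrap2pi (y$i + x$i))" using phi[of y S] A(1) by auto
      thus "z \<in> (\<lambda>y. \<chi> i. wrap2pi (y$i + x$i)) ` A" using y(1) by blast
    qed
  qed
  have PS: "P S \<in> sets lebesgue" for S
  proof -
    have eq: "P S = (\<Inter>i\<in>S. {y. 2*pi - x'$i \<le> y$i}) \<inter> (\<Inter>i\<in>-S. {y. y$i < 2*pi - x'$i})"
      by (auto simp: P_def) (smt (verit) ComplI)+
    have "closed (\<Inter>i\<in>S. {y::real^'n. 2*pi - x'$i \<le> y$i})"
      by (intro closed_INT) (auto simp: closed_halfspace_component_ge_cart)
    moreover have "open (\<Inter>i\<in>-S. {y::real^'n. y$i < 2*pi - x'$i})"
      by (intro open_INT) (auto simp: open_halfspace_component_lt_cart)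
    ultimately show ?thesis unfolding eq by (intro sets.Int closed_leb open_leb)
  qed
  have APm: "A \<inter> P S \<in> lmeasurable" for S
    by (rule fmeasurableI2[OF torus_lmeas]) (use A PS in auto)
  have trm: "(\<lambda>y. v S + y) ` (A \<inter> P S) \<in> lmeasurable" for S
    using measurable_translation[OF APm, of "v S" S] by simp
  show "torus_translate A x \<in> lmeasurable" unfolding key
    by (intro fmeasurable.finite_UN trm) auto
  have "measure lebesgue (torus_translate A x)
      \<le> (\<Sum>S\<in>UNIV. measure lebesgue ((\<lambda>y. v S + y) ` (A \<inter> P S)))"
    unfolding key by (intro measure_UNION_le) (auto intro: fmeasurableD trm)
  also have "\<dots> = (\<Sum>S\<in>UNIV. measure lebesgue (A \<inter> P S))"
    by (simp only: measure_translation)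
  also have "\<dots> = measure lebesgue (\<Union>S. A \<inter> P S)"
  proof (rule measure_UNION'[symmetric])
    show "pairwise (\<lambda>i j. disjnt (A \<inter> P i) (A \<inter> P j)) UNIV"
      unfolding pairwise_def disjnt_def using Puniq by blast
  qed (auto simp: APm)
  also have "(\<Union>S. A \<inter> P S) = A" using Pall by blast
  finally show "measure lebesgue (torus_translate A x) \<le> measure lebesgue A" .
qed

lemma sub_torus_lmeas: "A \<subseteq> torus \<Longrightarrow> A \<in> sets lebesgue \<Longrightarrow> A \<in> lmeasurable"
  by (rule fmeasurableI2[OF torus_lmeas])

lemma Lambda_sub:
  fixes M :: "(real^'n) set"
  assumes M: "M \<subseteq> torus" "M \<in> sets lebesgue"
  shows "Lambda M (x + y) \<le> Lambda M x + Lambda M y"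
proof -
  have Tx: "torus_translate M x \<in> sets lebesgue" "torus_translate M x \<subseteq> torus"
    using TT_meas[OF M, of x] TT_torus by (auto intro: fmeasurableD)
  have Ty: "torus_translate M y \<in> sets lebesgue" "torus_translate M y \<subseteq> torus"
    using TT_meas[OF M, of y] TT_torus by (auto intro: fmeasurableD)
  have Txy: "torus_translate M (x+y) \<in> sets lebesgue"
    using TT_meas[OF M, of "x+y"] by (auto intro: fmeasurableD)
  have eq1: "torus_translate M (x+y) = torus_translate (torus_translate M x) y"
    by (simp add: TT_comp add.commute)
  have eq2: "torus_translate M y - torus_translate M (x+y) = torus_translate (M - torus_translate M x) y"
    unfolding eq1 using TT_diff[of M "torus_translate M x" y] M Tx by simp
  have D: "M - torus_translate M x \<subseteq> torus" "M - torus_translate M x \<in> sets lebesgue"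
    using M Tx by auto
  have "Lambda M (x+y) \<le> measure lebesgue ((M - torus_translate M y) \<union> (torus_translate M y - torus_translate M (x+y)))"
    unfolding Lambda_def
    by (rule measure_mono_fmeasurable) (use M Ty Txy in \<open>auto intro!: sub_torus_lmeas\<close>)
  also have "\<dots> \<le> measure lebesgue (M - torus_translate M y) + measure lebesgue (torus_translate M y - torus_translate M (x+y))"
    by (rule measure_Un_le) (use M Ty Txy in auto)
  also have "measure lebesgue (torus_translate M y - torus_translate M (x+y)) \<le> Lambda M x"
    unfolding eq2 Lambda_def by (rule TT_meas(2)[OF D])
  finally show ?thesis by (simp add: Lambda_def)
qed

lemma TT_zero: "(M :: (real^'n) set) \<subseteq> torus \<Longrightarrow> torus_translate M 0 = M"
proof -
  assume M: "M \<subseteq> torus"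
  have "(\<lambda>y::real^'n. \<chi> i. wrap2pi (y$i + 0$i)) ` M = id ` M"
    by (rule image_cong[OF refl]) (use M in \<open>auto simp: vec_eq_iff wrap_id torus_def\<close>)
  thus ?thesis by (simp add: torus_translate_def)
qed

lemma Lambda_nonneg: "Lambda M x \<ge> 0" by (simp add: Lambda_def)

lemma Lambda_mult:
  fixes M :: "(real^'n) set"
  assumes M: "M \<subseteq> torus" "M \<in> sets lebesgue"
  shows "Lambda M (real n *\<^sub>R x) \<le> real n * Lambda M x"
proof (induction n)
  case 0
  thus ?case using TT_zero[OF M(1)] by (simp add: Lambda_def)
next
  case (Suc n)
  have "Lambda M (real (Suc n) *\<^sub>R x) = Lambda M (x + real n *\<^sub>R x)"
    by (simp add: algebra_simps)
  also have "\<dots> \<le> Lambda M x + Lambda M (real n *\<^sub>R x)" by (rule Lambda_sub[OF M])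
  also have "\<dots> \<le> Lambda M x + real n * Lambda M x" using Suc by simp
  finally show ?case by (simp add: algebra_simps)
qed



lemma Lambda_cont:
  fixes M :: "(real^'n) set"
  assumes M: "M \<subseteq> torus" "M \<in> sets lebesgue" and e: "e > 0"
  shows "\<exists>d>0. \<forall>x. norm x < d \<longrightarrow> Lambda M x < e"
proof -
  define c :: "real^'n" where "c = (\<chi> i. 2*pi)"
  define B where "B = box 0 c"
  have Bt: "B \<subseteq> torus" by (auto simp: B_def c_def torus_def mem_box_cart less_imp_le)
  have tc: "torus \<subseteq> cbox 0 c" using less_imp_le by (fastforce simp: torus_def c_def mem_box_cart)
  have Bm: "B \<in> sets lebesgue" by (simp add: B_def open_leb)
  define M' where "M' = M \<inter> B"
  have M'm: "M' \<in> sets lebesgue" unfolding M'_def B_def by (rule sets.Int[OF M(2) open_leb[OF open_box]])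
  obtain K where K: "closed K" "K \<subseteq> M'" "M' - K \<in> lmeasurable" "emeasure lebesgue (M' - K) < ennreal (e/3)"
    using sets_lebesgue_inner_closed[OF M'm, of "e/3"] e by auto
  have KB: "K \<subseteq> B" using K(2) by (auto simp: M'_def)
  have cK: "compact K" using K(1) KB unfolding B_def
    by (meson bounded_box bounded_subset compact_eq_bounded_closed)
  have Km: "K \<in> sets lebesgue" using cK lmeasurable_compact fmeasurableD by blast
  obtain U where U: "open U" "K \<subseteq> U" "U - K \<in> lmeasurable" "emeasure lebesgue (U - K) < ennreal (e/3)"
    using sets_lebesgue_outer_open[OF Km, of "e/3"] e by auto
  obtain d where d: "d > 0" "(\<Union>x\<in>K. ball x d) \<subseteq> U \<inter> B"
    using compact_subset_open_imp_ball_epsilon_subset[OF cK, of "U \<inter> B"] U KB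
    by (auto simp: B_def)
  have m1: "measure lebesgue (M' - K) < e/3"
    using K(3,4) by (simp add: emeasure_eq_measure2 ennreal_less_iff)
  have m2: "measure lebesgue (U - K) < e/3"
    using U(3,4) by (simp add: emeasure_eq_measure2 ennreal_less_iff)
  have MB0: "measure lebesgue (M - B) = 0"
  proof -
    have "negligible (M - B)"
      by (rule negligible_subset[OF negligible_frontier_interval[of 0 c]]) (use M tc in \<open>auto simp: B_def\<close>)
    thus ?thesis by (simp add: negligible_imp_measure0)
  qed
  have MK: "measure lebesgue (M - K) < e/3"
  proof -
    have "measure lebesgue (M - K) \<le> measure lebesgue ((M - B) \<union> (M' - K))"
      by (rule measure_mono_fmeasurable) (use M M'm Km Bm in \<open>auto simp: M'_def intro!: sub_torus_lmeas sets.Un sets.Diff sets.Int\<close>)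
    also have "\<dots> \<le> measure lebesgue (M - B) + measure lebesgue (M' - K)"
      by (rule measure_Un_le) (use M M'm Km Bm in \<open>auto intro!: sets.Diff\<close>)
    finally show ?thesis using MB0 m1 by simp
  qed
  show ?thesis
  proof (intro exI[of _ d] conjI allI impI d(1))
    fix x :: "real^'n" assume nx: "norm x < d"
    define Kx where "Kx = (+) x ` K"
    have KxUB: "Kx \<subseteq> U \<inter> B"
    proof
      fix z assume "z \<in> Kx"
      then obtain k where k: "k \<in> K" "z = x + k" by (auto simp: Kx_def)
      have "z \<in> ball k d" using k nx by (simp add: dist_norm)
      thus "z \<in> U \<inter> B" using d(2) k(1) by blast
    qed
    have TK: "torus_translate K x = Kx"
      unfolding torus_translate_def Kx_def
    proof (rule image_cong[OF refl])
      fix k assume k: "k \<in> K"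
      have "x + k \<in> torus" using KxUB Bt k by (auto simp: Kx_def)
      thus "(\<chi> i. wrap2pi (k$i + x$i)) = x + k"
      proof (subst vec_eq_iff, intro allI)
        fix i
        have "0 \<le> k$i + x$i" "k$i + x$i < 2*pi"
          using \<open>x + k \<in> torus\<close> by (auto simp: torus_def add.commute)
        thus "(\<chi> i. wrap2pi (k$i + x$i)) $ i = (x + k) $ i"
          by (simp add: wrap_id add.commute)
      qed
    qed
    have Kxm: "Kx \<in> lmeasurable" unfolding Kx_def using cK
      by (intro measurable_translation lmeasurable_compact)
    have Kl: "K \<in> lmeasurable" using cK lmeasurable_compact by blast
    have mKx: "measure lebesgue Kx = measure lebesgue K" unfolding Kx_def by (rule measure_translation)
    have KKm: "K \<inter> Kx \<in> sets lebesgue" by (rule sets.Int[OF Km fmeasurableD[OF Kxm]])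
    have e1: "K - Kx = K - (K \<inter> Kx)" by blast
    have e2: "Kx - K = Kx - (K \<inter> Kx)" by blast
    have "measure lebesgue (K - Kx) = measure lebesgue K - measure lebesgue (K \<inter> Kx)"
      unfolding e1 by (rule measure_Diff) (use Kl Km KKm in \<open>auto simp: fmeasurable_def\<close>)
    also have "\<dots> = measure lebesgue Kx - measure lebesgue (K \<inter> Kx)" using mKx by simp
    also have "\<dots> = measure lebesgue (Kx - K)"
      unfolding e2 by (rule measure_Diff[symmetric]) (use Kxm KKm in \<open>auto simp: fmeasurable_def\<close>)
    also have "\<dots> \<le> measure lebesgue (U - K)"
      by (rule measure_mono_fmeasurable) (use KxUB U Kxm Km in \<open>auto intro: fmeasurableD\<close>)
    finally have KKx: "measure lebesgue (K - Kx) < e/3" using m2 by simp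
    have "M - torus_translate M x \<subseteq> (M - K) \<union> (K - Kx)"
      using TT_mono[of K M x] K(2) TK by (auto simp: M'_def)
    hence "Lambda M x \<le> measure lebesgue ((M - K) \<union> (K - Kx))"
      unfolding Lambda_def
    proof (rule measure_mono_fmeasurable)
      show "M - torus_translate M x \<in> sets lebesgue"
        using M(2) fmeasurableD[OF TT_meas(1)[OF M, of x]] by (rule sets.Diff)
      have "M - K \<in> sets lebesgue" using M(2) Km by (rule sets.Diff)
      moreover have "K - Kx \<in> sets lebesgue" using Km fmeasurableD[OF Kxm] by (rule sets.Diff)
      ultimately have "(M - K) \<union> (K - Kx) \<in> sets lebesgue" by (rule sets.Un)
      moreover have "(M - K) \<union> (K - Kx) \<subseteq> torus" using M(1) K(2) by (auto simp: M'_def)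
      ultimately show "(M - K) \<union> (K - Kx) \<in> lmeasurable" by (intro sub_torus_lmeas)
    qed
    also have "\<dots> \<le> measure lebesgue (M - K) + measure lebesgue (K - Kx)"
      by (rule measure_Un_le) (use M Km Kxm in \<open>auto intro: fmeasurableD\<close>)
    finally show "Lambda M x < e" using MK KKx e by linarith
  qed
qed

theorem mainTheorem5:
  fixes M :: "(real ^ 'n) set" and a :: "real ^ 'n"
  assumes "M \<subseteq> torus" and "M \<in> sets lebesgue"
    and "Lambda M a > 0"
  shows "\<exists>c>0. \<exists>\<epsilon>>0. \<forall>t::real. 0 < t \<and> t < \<epsilon> \<longrightarrow> Lambda M (t *\<^sub>R a) \<ge> c * t"
proof -
  have M: "M \<subseteq> torus" "M \<in> sets lebesgue" using assms by auto
  define L where "L = Lambda M a"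
  have L: "L > 0" using assms by (simp add: L_def)
  obtain d where d: "d > 0" "\<And>x. norm x < d \<Longrightarrow> Lambda M x < L/2"
    using Lambda_cont[OF M, of "L/2"] L by auto
  define \<epsilon> where "\<epsilon> = min 1 (d / (norm a + 1))"
  have \<epsilon>: "\<epsilon> > 0" using d(1) norm_ge_zero[of a] by (simp add: \<epsilon>_def add_nonneg_pos)
  have main: "Lambda M (t *\<^sub>R a) \<ge> L/2 * t" if t: "0 < t \<and> t < \<epsilon>" for t :: real
  proof -
    from t have t0: "0 < t" and t1: "t < 1" and td: "t < d / (norm a + 1)" by (auto simp: \<epsilon>_def)
    define n where "n = nat \<lfloor>1/t\<rfloor>"
    have "1 < 1/t" using t0 t1 by (simp add: field_simps)
    hence f1: "1 \<le> \<lfloor>1/t\<rfloor>" by (simp add: le_floor_iff)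
    have rn: "real n = of_int \<lfloor>1/t\<rfloor>" unfolding n_def by (rule of_nat_nat) (use f1 in linarith)
    have n1: "real n \<le> 1/t" "1/t < real n + 1" "1 \<le> real n"
      unfolding rn using f1 by linarith+
    have nt: "real n * t \<le> 1" using n1(1) t0 by (simp add: field_simps)
    have nt2: "1 < (real n + 1) * t" using n1(2) t0 by (simp add: field_simps)
    define r where "r = 1 - real n * t"
    have r: "0 \<le> r" "r < t" using nt nt2 by (auto simp: r_def algebra_simps)
    have adec: "a = real n *\<^sub>R (t *\<^sub>R a) + r *\<^sub>R a"
      by (simp add: r_def algebra_simps)
    have "norm (r *\<^sub>R a) = r * norm a" using r by simp
    also have "\<dots> \<le> t * norm a" using r by (intro mult_right_mono) auto
    also have "\<dots> < d"
    proof -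
      have pos: "0 < norm a + 1" using norm_ge_zero[of a] by linarith
      have "t * (norm a + 1) < d" using td by (simp only: pos_less_divide_eq[OF pos])
      thus ?thesis using t0 by (simp add: algebra_simps)
    qed
    finally have Lr: "Lambda M (r *\<^sub>R a) < L/2" by (rule d(2))
    have "L \<le> Lambda M (real n *\<^sub>R (t *\<^sub>R a)) + Lambda M (r *\<^sub>R a)"
      unfolding L_def by (subst adec, rule Lambda_sub[OF M])
    also have "\<dots> \<le> real n * Lambda M (t *\<^sub>R a) + Lambda M (r *\<^sub>R a)"
      using Lambda_mult[OF M, of n "t *\<^sub>R a"] by linarith
    finally have "L/2 \<le> real n * Lambda M (t *\<^sub>R a)" using Lr by linarith
    hence "L/2 * t \<le> (real n * t) * Lambda M (t *\<^sub>R a)"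
      using t0 by (simp add: mult_right_mono algebra_simps)
    also have "\<dots> \<le> 1 * Lambda M (t *\<^sub>R a)"
      using nt Lambda_nonneg by (intro mult_right_mono) auto
    finally show "Lambda M (t *\<^sub>R a) \<ge> L/2 * t" by simp
  qed
  show ?thesis using main L \<epsilon> by (intro exI[of _ "L/2"] conjI exI[of _ \<epsilon>]) auto
qed

end
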